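(* Let $\mathbb Z^N\subset\mathbb R^N$ be the lattice generated by an orthonormal basis, let $F\subset\mathbb R^N$ be a subspace and $\phi:\mathbb R^N\to F$ the orthogonal projection. Let $F=V\oplus W$ be a direct sum decomposition into real subspaces such that $\phi(\mathbb Z^N)\cap V$ is dense in $V$, $\phi(\mathbb Z^N)\cap W$ is discrete, and $\phi(\mathbb Z^N)=(V\cap\phi(\mathbb Z^N))+(W\cap\phi(\mathbb Z^N))$. Then $(F\cap\mathbb Z^N)+(V\cap\phi(\mathbb Z^N))$ is a subgroup of finite index in $\phi(\mathbb Z^N)$, the lattice $F\cap\mathbb Z^N$ has rank $\dim F-\dim V$, and the real vector space spanned by $F\cap\mathbb Z^N$ is orthogonal to $V$. *)

theory Defs
  imports "HOL-Analysis.Analysis"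
begin

definition int_lattice :: "(real ^ 'n) set" where
  "int_lattice = {x. \<forall>i. x $ i \<in> \<int>}"

definition add_subgroup_of :: "'a::ab_group_add set \<Rightarrow> 'a set \<Rightarrow> bool" where
  "add_subgroup_of H G \<longleftrightarrow> H \<subseteq> G \<and> 0 \<in> H \<and>
     (\<forall>x\<in>H. \<forall>y\<in>H. x + y \<in> H) \<and> (\<forall>x\<in>H. - x \<in> H)"

definition finite_index :: "'a::ab_group_add set \<Rightarrow> 'a set \<Rightarrow> bool" where
  "finite_index H G \<longleftrightarrow> finite ((\<lambda>x. (\<lambda>h. x + h) ` H) ` G)"

definition int_independent :: "'a::real_vector set \<Rightarrow> bool" where
  "int_independent S \<longleftrightarrow> (\<forall>T c. finite T \<and> T \<subseteq> S \<and> (\<forall>v\<in>T. c v \<in> \<int>) \<and>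
       (\<Sum>v\<in>T. c v *\<^sub>R v) = 0 \<longrightarrow> (\<forall>v\<in>T. c v = 0))"

definition group_rank :: "'a::real_vector set \<Rightarrow> nat" where
  "group_rank L = (GREATEST k. \<exists>S. S \<subseteq> L \<and> finite S \<and> card S = k \<and> int_independent S)"

definition set_plus_sp :: "'a::ab_group_add set \<Rightarrow> 'a set \<Rightarrow> 'a set" where
  "set_plus_sp A B = {a + b | a b. a \<in> A \<and> b \<in> B}"

end

theory Submission
  imports Defs
begin


lemma int_lattice_iff: "x \<in> int_lattice \<longleftrightarrow> (\<forall>i. x $ i \<in> \<int>)"
  by (simp add: int_lattice_def)

lemma int_lattice_zero[simp]: "0 \<in> int_lattice"
  by (simp add: int_lattice_def)

lemma int_lattice_add: "x \<in> int_lattice \<Longrightarrow> y \<in> int_lattice \<Longrightarrow> x + y \<in> int_lattice"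
  by (simp add: int_lattice_def)

lemma int_lattice_diff: "x \<in> int_lattice \<Longrightarrow> y \<in> int_lattice \<Longrightarrow> x - y \<in> int_lattice"
  by (simp add: int_lattice_def)

lemma int_lattice_minus: "x \<in> int_lattice \<Longrightarrow> - x \<in> int_lattice"
  by (simp add: int_lattice_def)

lemma int_lattice_scale: "x \<in> int_lattice \<Longrightarrow> of_int m *\<^sub>R x \<in> int_lattice"
  by (simp add: int_lattice_def)

lemma int_lattice_sum: "(\<And>i. i \<in> A \<Longrightarrow> f i \<in> int_lattice) \<Longrightarrow> sum f A \<in> int_lattice"
  by (induction A rule: infinite_finite_induct) (auto intro: int_lattice_add)

lemma int_lattice_inner: "x \<in> int_lattice \<Longrightarrow> y \<in> int_lattice \<Longrightarrow> x \<bullet> y \<in> \<int>"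
  unfolding inner_vec_def int_lattice_def by (auto intro!: Ints_sum Ints_mult)

lemma int_lattice_small: "z \<in> int_lattice \<Longrightarrow> norm z < 1 \<Longrightarrow> z = 0"
proof -
  assume z: "z \<in> int_lattice" and n: "norm z < 1"
  have "z $ i = 0" for i
  proof -
    have "\<bar>z $ i\<bar> < 1" using component_le_norm_cart[of z i] n by linarith
    moreover obtain m where "z $ i = of_int m" using z unfolding int_lattice_def by (auto elim: Ints_cases)
    ultimately show ?thesis by auto
  qed
  then show ?thesis by (simp add: vec_eq_iff)
qed

lemma rational_kernel:
  fixes f :: "real^'m \<Rightarrow> 'b::real_normed_vector"
  assumes lf: "linear f" and e: "e > 0"
    and disc: "\<And>z. z \<in> int_lattice \<Longrightarrow> norm (f z) < e \<Longrightarrow> f z = 0"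
    and fx: "f x = 0"
  shows "x \<in> span {z \<in> int_lattice. f z = 0}"
proof -
  let ?S = "span {z \<in> int_lattice. f z = 0}"
  have "closed ?S" by (simp add: closed_subspace)
  obtain B where B: "B > 0" "\<And>y. norm (f y) \<le> B * norm y"
    using linear_bounded_pos[OF lf] by blast
  define m where "m = CARD('m)"
  have m0: "m > 0" unfolding m_def by simp
  obtain h where h: "bij_betw h {0..<m} (UNIV::'m set)"
    using ex_bij_betw_nat_finite[of "UNIV::'m set"] unfolding m_def by auto
  have "x \<in> closure ?S"
  proof (unfold closure_approachable, intro allI impI)
    fix \<delta> :: real assume d: "\<delta> > 0"
    define Q :: nat where "Q = nat \<lceil>m * B / e + m / \<delta>\<rceil> + 1"
    have Q0: "Q > 0" unfolding Q_def by simp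
    have Qge: "real Q > m * B / e + m / \<delta>" unfolding Q_def by linarith
    have mBe: "m * B / e \<ge> 0" "m / \<delta> \<ge> 0" using B e d m0 by auto
    have Q1: "m * B / Q < e"
    proof -
      have "m * B / e < Q" using Qge mBe by linarith
      then have "m * B < e * Q" using e by (simp add: field_simps)
      then show ?thesis using Q0 by (simp add: field_simps)
    qed
    have Q2: "m / Q < \<delta>"
    proof -
      have "m / \<delta> < Q" using Qge mBe by linarith
      then have "m < \<delta> * Q" using d by (simp add: field_simps)
      then show ?thesis using Q0 by (simp add: field_simps)
    qed
    obtain q p where q: "0 < q" and qp: "\<And>j. j < m \<Longrightarrow> \<bar>of_int q * (x $ h j) - of_int (p j)\<bar> < 1 / Q"
      using Dirichlet_approx_simult[OF Q0, where \<theta>="\<lambda>j. x $ h j" and n=m] by blast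
    define z :: "real^'m" where "z = (\<chi> i. of_int (p (inv_into {0..<m} h i)))"
    have zi: "\<bar>of_int q * x $ i - z $ i\<bar> < 1 / Q" for i
    proof -
      have "inv_into {0..<m} h i \<in> {0..<m}" "h (inv_into {0..<m} h i) = i"
        using h by (metis UNIV_I bij_betw_def inv_into_into, metis UNIV_I bij_betw_def f_inv_into_f)
      then show ?thesis using qp[of "inv_into {0..<m} h i"] by (simp add: z_def)
    qed
    have nz: "norm (of_int q *\<^sub>R x - z) \<le> m / Q"
    proof -
      have "norm (of_int q *\<^sub>R x - z) \<le> (\<Sum>i\<in>UNIV. \<bar>(of_int q *\<^sub>R x - z) $ i\<bar>)"
        by (rule norm_le_l1_cart)
      also have "\<dots> \<le> (\<Sum>i\<in>(UNIV::'m set). 1 / Q)"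
        by (rule sum_mono) (use zi in \<open>auto intro: less_imp_le\<close>)
      also have "\<dots> = m / Q" by (simp add: m_def)
      finally show ?thesis .
    qed
    have zZ: "z \<in> int_lattice" by (simp add: int_lattice_def z_def)
    have "f z = f (z - of_int q *\<^sub>R x)"
      using fx by (simp add: linear_diff[OF lf] linear_scale[OF lf])
    then have "norm (f z) \<le> B * norm (of_int q *\<^sub>R x - z)"
      using B(2)[of "z - of_int q *\<^sub>R x"] by (simp add: norm_minus_commute)
    also have "\<dots> \<le> B * (m / Q)" using nz B by (intro mult_left_mono) auto
    also have "\<dots> < e" using Q1 by (simp add: mult.commute)
    finally have "f z = 0" using disc zZ by blast
    then have zS: "z \<in> ?S" using zZ by (auto intro: span_base)
    define y where "y = (1 / of_int q) *\<^sub>R z"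
    have "y \<in> ?S" unfolding y_def by (rule span_mul[OF zS])
    moreover have "dist y x < \<delta>"
    proof -
      have "y - x = (1 / of_int q) *\<^sub>R (z - of_int q *\<^sub>R x)" using q
        by (simp add: y_def scaleR_diff_right)
      then have "dist y x = norm (of_int q *\<^sub>R x - z) / of_int q"
        using q by (simp add: dist_norm norm_minus_commute divide_simps)
      also have "\<dots> \<le> norm (of_int q *\<^sub>R x - z)"
        using q by (simp add: divide_le_eq mult_le_cancel_left1)
      also have "\<dots> < \<delta>" using nz Q2 by linarith
      finally show ?thesis .
    qed
    ultimately show "\<exists>y\<in>?S. dist y x < \<delta>" by blast
  qed
  then show ?thesis using \<open>closed ?S\<close> closure_closed by auto
qed

lemma int_lattice_scaleR: "r \<in> \<int> \<Longrightarrow> x \<in> int_lattice \<Longrightarrow> r *\<^sub>R x \<in> int_lattice"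
  by (simp add: int_lattice_def)

lemma reindex_embed:
  fixes h :: "'b \<Rightarrow> 'i::finite" and G :: "'b \<Rightarrow> 'c::comm_monoid_add"
  assumes "inj_on h B" "finite B"
  shows "(\<Sum>i\<in>UNIV. (if i \<in> h ` B then G (inv_into B h i) else 0)) = (\<Sum>b\<in>B. G b)"
proof -
  have "(\<Sum>i\<in>UNIV. (if i \<in> h ` B then G (inv_into B h i) else 0)) = (\<Sum>i\<in>h ` B. G (inv_into B h i))"
    using sum.inter_restrict[OF finite_class.finite_UNIV, of "\<lambda>i. G (inv_into B h i)" "h ` B"] by simp
  also have "\<dots> = (\<Sum>b\<in>B. G (inv_into B h (h b)))"
    by (rule sum.reindex[OF assms(1), unfolded comp_def])
  also have "\<dots> = (\<Sum>b\<in>B. G b)"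
    using assms(1) by (intro sum.cong) (auto simp: inv_into_f_f)
  finally show ?thesis .
qed

lemma rational_span:
  fixes B :: "(real^'n) set"
  assumes indB: "independent B" and BZ: "B \<subseteq> int_lattice" and xZ: "x \<in> int_lattice"
    and xB: "x \<in> span B"
  shows "\<exists>d a. d > (0::int) \<and> of_int d *\<^sub>R x = (\<Sum>b\<in>B. of_int (a b) *\<^sub>R b)"
proof -
  have finB: "finite B" and cB: "card B \<le> CARD('n)"
    using independent_bound[OF indB] by auto
  obtain h :: "real^'n \<Rightarrow> 'n" where h: "inj_on h B"
    using card_le_inj[OF finB, of "UNIV::'n set"] cB by auto
  define k where "k i = (if i \<in> h ` B then inv_into B h i else 0)" for i
  have kZ: "k i \<in> int_lattice" for i
    using BZ h by (auto simp: k_def inv_into_into)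
  obtain u where u: "x = (\<Sum>b\<in>B. u b *\<^sub>R b)"
    using xB span_finite[OF finB] by auto
  define c where "c i = (if i \<in> h ` B then u (inv_into B h i) else 0)" for i
  have sumc: "(\<Sum>i\<in>UNIV. c i *\<^sub>R k i) = x"
    using reindex_embed[OF h finB, of "\<lambda>b. u b *\<^sub>R b"] u
    by (simp add: c_def k_def if_distrib cong: if_cong)
  define f :: "real^('n option) \<Rightarrow> real^'n" where
    "f y = (\<Sum>i\<in>UNIV. y $ Some i *\<^sub>R k i) - y $ None *\<^sub>R x" for y
  have lf: "linear f"
    by (rule linearI) (simp_all add: f_def scaleR_add_left sum.distrib scaleR_sum_right algebra_simps)
  have disc: "f z = 0" if "z \<in> int_lattice" "norm (f z) < 1" for z
  proof -
    have "f z \<in> int_lattice"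
      unfolding f_def using that(1) kZ xZ
      by (intro int_lattice_diff int_lattice_sum int_lattice_scaleR) (auto simp: int_lattice_def)
    then show ?thesis using int_lattice_small that(2) by blast
  qed
  define \<gamma> :: "real^('n option)" where "\<gamma> = (\<chi> j. case j of None \<Rightarrow> 1 | Some i \<Rightarrow> c i)"
  have fg: "f \<gamma> = 0" by (simp add: f_def \<gamma>_def sumc)
  have g: "\<gamma> \<in> span {z \<in> int_lattice. f z = 0}"
    by (rule rational_kernel[OF lf zero_less_one disc fg])
  have "\<exists>z\<in>{z \<in> int_lattice. f z = 0}. z $ None \<noteq> 0"
  proof (rule ccontr)
    assume "\<not> ?thesis"
    then have "{z \<in> int_lattice. f z = 0} \<subseteq> {y. y $ None = 0}" by auto
    moreover have "subspace {y :: real^('n option). y $ None = 0}"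
      by (auto simp: subspace_def)
    ultimately have "span {z \<in> int_lattice. f z = 0} \<subseteq> {y. y $ None = 0}"
      by (rule span_minimal)
    with g show False by (auto simp: \<gamma>_def)
  qed
  then obtain z where zZ: "z \<in> int_lattice" and fz: "f z = 0" and zN: "z $ None \<noteq> 0" by auto
  have "z $ None \<in> \<int>" using zZ by (simp add: int_lattice_def)
  then obtain T where T: "z $ None = of_int T" by (auto elim: Ints_cases)
  have zi: "z $ Some i = of_int \<lfloor>z $ Some i\<rfloor>" for i
  proof -
    have "z $ Some i \<in> \<int>" using zZ by (simp add: int_lattice_def)
    then show ?thesis by (auto elim!: Ints_cases)
  qed
  define a' where "a' i = sgn T * \<lfloor>z $ Some i\<rfloor>" for i
  have T0: "T \<noteq> 0" using zN T by auto
  have eq1: "of_int T *\<^sub>R x = (\<Sum>i\<in>UNIV. z $ Some i *\<^sub>R k i)"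
    using fz T by (simp add: f_def)
  have "of_int \<bar>T\<bar> *\<^sub>R x = of_int (sgn T) *\<^sub>R (of_int T *\<^sub>R x)"
    by (simp add: abs_sgn mult.commute)
  also have "\<dots> = (\<Sum>i\<in>UNIV. of_int (a' i) *\<^sub>R k i)"
    unfolding eq1 scaleR_sum_right a'_def by (subst zi) simp
  also have "\<dots> = (\<Sum>b\<in>B. of_int (a' (h b)) *\<^sub>R b)"
    using reindex_embed[OF h finB, of "\<lambda>b. of_int (a' (h b)) *\<^sub>R b"] h
    by (auto simp: k_def if_distrib f_inv_into_f cong: if_cong)
  finally show ?thesis using T0 by (intro exI[of _ "\<bar>T\<bar>"] exI[of _ "\<lambda>b. a' (h b)"]) auto
qed



lemma orth_zero:
  fixes u :: "'a::real_inner"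
  assumes "u \<in> S" "\<forall>z\<in>S. u \<bullet> z = 0" shows "u = 0"
  using assms by auto

lemma proj_exists:
  fixes S :: "(real^'n) set"
  assumes "subspace S"
  shows "\<exists>p. \<forall>x. p x \<in> S \<and> (\<forall>z\<in>S. (x - p x) \<bullet> z = 0)"
proof -
  have "\<forall>x. \<exists>y. y \<in> S \<and> (\<forall>z\<in>S. (x - y) \<bullet> z = 0)"
  proof
    fix x
    have sS: "span S = S" using assms by (simp add: span_eq_iff)
    obtain y z where "y \<in> span S" "\<And>w. w \<in> span S \<Longrightarrow> orthogonal z w" "x = y + z"
      using orthogonal_subspace_decomp_exists[of S x] by blast
    then have "y \<in> S" "\<And>w. w \<in> S \<Longrightarrow> z \<bullet> w = 0" "x - y = z"
      unfolding sS orthogonal_def by auto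
    then show "\<exists>y. y \<in> S \<and> (\<forall>z\<in>S. (x - y) \<bullet> z = 0)"
      by auto
  qed
  then show ?thesis by (rule choice)
qed

lemma proj_props:
  fixes p :: "real^'n \<Rightarrow> real^'n"
  assumes S: "subspace S" and p: "\<And>x. p x \<in> S \<and> (\<forall>z\<in>S. (x - p x) \<bullet> z = 0)"
  shows "linear p" and "\<And>x. x \<in> S \<Longrightarrow> p x = x" and "\<And>x y. y \<in> S \<Longrightarrow> x \<bullet> y = p x \<bullet> y"
proof -
  show 3: "x \<bullet> y = p x \<bullet> y" if "y \<in> S" for x y
    using p[of x] that by (auto simp: inner_diff_left)
  show "linear p"
  proof (rule linearI)
    fix x y
    have "p (x + y) - p x - p y = 0"
    proof (rule orth_zero[where S=S])
      show "p (x + y) - p x - p y \<in> S" using S p by (metis subspace_diff)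
      show "\<forall>z\<in>S. (p (x + y) - p x - p y) \<bullet> z = 0"
      proof
        fix z assume z: "z \<in> S"
        note 3[OF z, of "x + y", symmetric] 3[OF z, of x, symmetric] 3[OF z, of y, symmetric]
        then show "(p (x + y) - p x - p y) \<bullet> z = 0" by (simp add: inner_diff_left inner_add_left)
      qed
    qed
    then show "p (x + y) = p x + p y" by (simp add: algebra_simps)
  next
    fix c x
    have "p (c *\<^sub>R x) - c *\<^sub>R p x = 0"
    proof (rule orth_zero[where S=S])
      show "p (c *\<^sub>R x) - c *\<^sub>R p x \<in> S" using S p by (metis subspace_diff subspace_scale)
      show "\<forall>z\<in>S. (p (c *\<^sub>R x) - c *\<^sub>R p x) \<bullet> z = 0"
      proof
        fix z assume z: "z \<in> S"
        note 3[OF z, of "c *\<^sub>R x", symmetric] 3[OF z, of x, symmetric]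
        then show "(p (c *\<^sub>R x) - c *\<^sub>R p x) \<bullet> z = 0" by (simp add: inner_diff_left)
      qed
    qed
    then show "p (c *\<^sub>R x) = c *\<^sub>R p x" by simp
  qed
  show "p x = x" if "x \<in> S" for x
  proof -
    have "x - p x = 0"
    proof (rule orth_zero[where S=S])
      show "x - p x \<in> S" using S p[of x] that by (simp add: subspace_diff)
      show "\<forall>z\<in>S. (x - p x) \<bullet> z = 0" using p[of x] by blast
    qed
    then show ?thesis by simp
  qed
qed


theorem lemmaI2p9:
  fixes F V W :: "(real ^ 'n) set" and \<phi> :: "real ^ 'n \<Rightarrow> real ^ 'n"
  assumes "subspace F"
    and proj: "\<And>x. \<phi> x \<in> F \<and> (\<forall>z\<in>F. (x - \<phi> x) \<bullet> z = 0)"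
    and "subspace V" and "subspace W"
    and "V \<inter> W = {0}" and "set_plus_sp V W = F"
    and "closure (\<phi> ` int_lattice \<inter> V) = V"
    and "discrete (\<phi> ` int_lattice \<inter> W)"
    and "\<phi> ` int_lattice = set_plus_sp (V \<inter> \<phi> ` int_lattice) (W \<inter> \<phi> ` int_lattice)"
  shows "add_subgroup_of (set_plus_sp (F \<inter> int_lattice) (V \<inter> \<phi> ` int_lattice)) (\<phi> ` int_lattice)
       \<and> finite_index (set_plus_sp (F \<inter> int_lattice) (V \<inter> \<phi> ` int_lattice)) (\<phi> ` int_lattice)
       \<and> group_rank (F \<inter> int_lattice) = dim F - dim V
       \<and> (\<forall>x\<in>span (F \<inter> int_lattice). \<forall>v\<in>V. x \<bullet> v = 0)"
proof -
  note sF = assms(1) and sV = assms(3) and sW = assms(4) and VW = assms(5) and VWF = assms(6)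
    and dens = assms(7) and disc = assms(8) and dec = assms(9)
  note pp = proj_props[OF sF proj]
  have lin\<phi>: "linear \<phi>" by (rule pp(1))
  have \<phi>F: "\<phi> x = x" if "x \<in> F" for x using pp(2) that by blast
  have \<phi>in: "x \<bullet> y = \<phi> x \<bullet> y" if "y \<in> F" for x y using pp(3) that by blast
  have \<phi>mem: "\<phi> x \<in> F" for x using proj by blast
  have VF: "V \<subseteq> F"
  proof
    fix v assume "v \<in> V"
    moreover have "0 \<in> W" using sW by (rule subspace_0)
    ultimately have "v + 0 \<in> set_plus_sp V W" unfolding set_plus_sp_def by blast
    then show "v \<in> F" using VWF by simp
  qed
  obtain pV where pV: "\<And>x. pV x \<in> V \<and> (\<forall>z\<in>V. (x - pV x) \<bullet> z = 0)"
    using proj_exists[OF sV] by blast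
  note qq = proj_props[OF sV pV]
  have linpV: "linear pV" by (rule qq(1))
  have pVV: "pV x = x" if "x \<in> V" for x using qq(2) that by blast
  have pVmem: "pV x \<in> V" for x using pV by blast
  have pVorth: "(x - pV x) \<bullet> v = 0" if "v \<in> V" for x v using pV that by blast

  define L where "L = F \<inter> int_lattice"
  define LV where "LV = V \<inter> \<phi> ` int_lattice"
  define H where "H = set_plus_sp L LV"
  have LV': "\<phi> ` int_lattice \<inter> V = LV" unfolding LV_def by blast

  have L0: "0 \<in> L" unfolding L_def using sF by (simp add: subspace_0)
  have Ladd: "a + b \<in> L" if "a \<in> L" "b \<in> L" for a b
    using that sF unfolding L_def by (auto intro: subspace_add int_lattice_add)
  have Lneg: "- a \<in> L" if "a \<in> L" for a
    using that sF unfolding L_def by (auto intro: subspace_neg int_lattice_minus)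
  have Lscale: "of_int m *\<^sub>R a \<in> L" if "a \<in> L" for a m
    using that sF unfolding L_def by (auto intro: subspace_scale int_lattice_scale)
  have LV0: "0 \<in> LV" unfolding LV_def using sV linear_0[OF lin\<phi>]
    by (auto intro: subspace_0 image_eqI[of 0 \<phi> 0])
  have LVadd: "a + b \<in> LV" if ab: "a \<in> LV" "b \<in> LV" for a b
  proof -
    obtain za zb where "za \<in> int_lattice" "zb \<in> int_lattice" "a = \<phi> za" "b = \<phi> zb" "a \<in> V" "b \<in> V"
      using ab unfolding LV_def by blast
    then show ?thesis unfolding LV_def using sV linear_add[OF lin\<phi>, of za zb]
      by (auto intro!: subspace_add image_eqI[of _ \<phi> "za + zb"] int_lattice_add)
  qed
  have LVneg: "- a \<in> LV" if ab: "a \<in> LV" for a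
  proof -
    obtain za where "za \<in> int_lattice" "a = \<phi> za" "a \<in> V"
      using ab unfolding LV_def by blast
    then show ?thesis unfolding LV_def using sV linear_neg[OF lin\<phi>, of za]
      by (auto intro!: subspace_neg image_eqI[of _ \<phi> "- za"] int_lattice_minus)
  qed
  have H0: "0 \<in> H" unfolding H_def set_plus_sp_def using L0 LV0 by force
  have Hadd: "a + b \<in> H" if ab: "a \<in> H" "b \<in> H" for a b
  proof -
    obtain l1 v1 l2 v2 where "l1 \<in> L" "v1 \<in> LV" "l2 \<in> L" "v2 \<in> LV" "a = l1 + v1" "b = l2 + v2"
      using ab unfolding H_def set_plus_sp_def by blast
    moreover have "a + b = (l1 + l2) + (v1 + v2)" using calculation by (simp add: algebra_simps)
    ultimately show ?thesis unfolding H_def set_plus_sp_def using Ladd LVadd by blast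
  qed
  have Hneg: "- a \<in> H" if ab: "a \<in> H" for a
  proof -
    obtain l1 v1 where "l1 \<in> L" "v1 \<in> LV" "a = l1 + v1"
      using ab unfolding H_def set_plus_sp_def by blast
    moreover have "- a = (- l1) + (- v1)" using calculation by (simp add: algebra_simps)
    ultimately show ?thesis unfolding H_def set_plus_sp_def using Lneg LVneg by blast
  qed
  have Hsub: "H \<subseteq> \<phi> ` int_lattice"
  proof
    fix a assume "a \<in> H"
    then obtain l v where "l \<in> L" "v \<in> LV" "a = l + v"
      unfolding H_def set_plus_sp_def by blast
    then obtain z where "l \<in> F" "l \<in> int_lattice" "z \<in> int_lattice" "v = \<phi> z"
      unfolding L_def LV_def by blast
    then have "a = \<phi> (l + z)" using \<open>a = l + v\<close> \<phi>F linear_add[OF lin\<phi>] by simp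
    then show "a \<in> \<phi> ` int_lattice" using \<open>l \<in> int_lattice\<close> \<open>z \<in> int_lattice\<close>
      by (auto intro: int_lattice_add)
  qed
  have part1: "add_subgroup_of H (\<phi> ` int_lattice)"
    unfolding add_subgroup_of_def using Hsub H0 Hadd Hneg by blast

  have \<phi>Z: "x \<bullet> \<phi> z = x \<bullet> z" if "x \<in> F" for x z
    using \<phi>in[OF that, of z] by (simp add: inner_commute)

  have orthL: "x \<bullet> v = 0" if xL: "x \<in> L" and vV: "v \<in> V" for x v
  proof (rule ccontr)
    assume a0: "x \<bullet> v \<noteq> 0"
    define t where "t = (1 / (2 * (x \<bullet> v))) *\<^sub>R v"
    have tV: "t \<in> V" unfolding t_def using sV vV by (rule subspace_scale)
    have xt: "x \<bullet> t = 1 / 2" unfolding t_def using a0 by simp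
    have "t \<in> closure LV" using tV dens LV' by simp
    moreover have nx1: "norm x + 1 > 0" using norm_ge_zero[of x] by linarith
    have nx: "2 * (norm x + 1) > 0" using nx1 by simp
    have epos: "1 / (2 * (norm x + 1)) > 0"
      using nx by (rule divide_pos_pos[OF zero_less_one])
    ultimately obtain u where uLV: "u \<in> LV" and du: "dist u t < 1 / (2 * (norm x + 1))"
      unfolding closure_approachable by blast
    then obtain z where zZ: "z \<in> int_lattice" and uz: "u = \<phi> z" unfolding LV_def by blast
    have xF: "x \<in> F" and xZ: "x \<in> int_lattice" using xL unfolding L_def by auto
    have "x \<bullet> u = x \<bullet> z" using \<phi>Z[OF xF] uz by simp
    then have xuI: "x \<bullet> u \<in> \<int>" using int_lattice_inner[OF xZ zZ] by simp
    have "\<bar>x \<bullet> u - 1 / 2\<bar> = \<bar>x \<bullet> (u - t)\<bar>" using xt by (simp add: inner_diff_right)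
    also have "\<dots> \<le> norm x * norm (u - t)" by (rule Cauchy_Schwarz_ineq2)
    also have "\<dots> \<le> (norm x + 1) * norm (u - t)" by (simp add: mult_right_mono)
    also have "\<dots> < (norm x + 1) * (1 / (2 * (norm x + 1)))"
      using du nx1 by (intro mult_strict_left_mono) (auto simp: dist_norm)
    also have "\<dots> = 1 / 2" using nx1 by simp
    finally have "\<bar>x \<bullet> u - 1 / 2\<bar> < 1 / 2" .
    then have "0 < x \<bullet> u" "x \<bullet> u < 1" by linarith+
    moreover obtain m where "x \<bullet> u = of_int m" using xuI by (auto elim: Ints_cases)
    ultimately show False by simp
  qed
  define U0 where "U0 = {y \<in> F. \<forall>v\<in>V. y \<bullet> v = 0}"
  have sU0: "subspace U0"
    unfolding subspace_def U0_def using sF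
    by (auto intro: subspace_0 subspace_add subspace_scale simp: inner_add_left)
  have LU0: "L \<subseteq> U0" using orthL unfolding U0_def L_def by blast
  have spanLU0: "span L \<subseteq> U0" using span_minimal[OF LU0 sU0] .
  have part4: "\<forall>x\<in>span L. \<forall>v\<in>V. x \<bullet> v = 0" using spanLU0 unfolding U0_def by blast

  define \<psi>1 where "\<psi>1 x = \<phi> x - pV (\<phi> x)" for x
  have lin1: "linear \<psi>1"
    by (rule linearI) (simp_all add: \<psi>1_def linear_add[OF lin\<phi>] linear_add[OF linpV]
        linear_scale[OF lin\<phi>] linear_scale[OF linpV] algebra_simps)
  have ker1: "\<psi>1 x = 0 \<longleftrightarrow> \<phi> x \<in> V" for x
  proof
    assume "\<psi>1 x = 0"
    then have "\<phi> x = pV (\<phi> x)" by (simp add: \<psi>1_def)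
    then show "\<phi> x \<in> V" using pVmem by metis
  next
    assume "\<phi> x \<in> V"
    then show "\<psi>1 x = 0" by (simp add: \<psi>1_def pVV)
  qed
  have "0 \<in> \<phi> ` int_lattice \<inter> W"
    using linear_0[OF lin\<phi>] sW by (auto intro: subspace_0 image_eqI[of 0 \<phi> 0])
  then have "0 isolated_in (\<phi> ` int_lattice \<inter> W)" using disc by (rule discreteD[rotated])
  then obtain \<delta> where \<delta>: "\<delta> > 0" and \<delta>W: "\<And>y. y \<in> \<phi> ` int_lattice \<inter> W \<Longrightarrow> dist 0 y < \<delta> \<Longrightarrow> y = 0"
    unfolding isolated_in_dist_Ex_iff by blast
  have linI: "linear (\<lambda>w. w - pV w)"
    by (rule linearI) (simp_all add: linear_add[OF linpV] linear_scale[OF linpV] algebra_simps)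
  obtain c where c: "c > 0" and cW: "\<And>w. w \<in> W \<Longrightarrow> c * norm w \<le> norm (w - pV w)"
  proof -
    have "\<exists>e>0. \<forall>x\<in>W. norm (x - pV x) \<ge> e * norm x"
    proof (rule injective_imp_isometric)
      show "closed W" using sW by (rule closed_subspace)
      show "subspace W" by (rule sW)
      show "bounded_linear (\<lambda>w. w - pV w)" using linI by (simp add: linear_conv_bounded_linear)
      show "\<forall>x\<in>W. x - pV x = 0 \<longrightarrow> x = 0"
      proof (intro ballI impI)
        fix x assume "x \<in> W" "x - pV x = 0"
        then have "x \<in> V" using pVmem[of x] by simp
        then show "x = 0" using \<open>x \<in> W\<close> VW by blast
      qed
    qed
    then show ?thesis using that by blast
  qed
  have disc1: "\<psi>1 z = 0" if zZ: "z \<in> int_lattice" and nz: "norm (\<psi>1 z) < c * \<delta>" for z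
  proof -
    have "\<phi> z \<in> set_plus_sp (V \<inter> \<phi> ` int_lattice) (W \<inter> \<phi> ` int_lattice)"
      using dec zZ by blast
    then obtain v w where v: "v \<in> V" and w: "w \<in> W \<inter> \<phi> ` int_lattice" and vw: "\<phi> z = v + w"
      unfolding set_plus_sp_def by blast
    have "\<psi>1 z = w - pV w"
      unfolding \<psi>1_def vw linear_add[OF linpV] using pVV[OF v] by simp
    then have "c * norm w < c * \<delta>" using cW[of w] w nz by simp
    then have "norm w < \<delta>" using c by simp
    then have "w = 0" using \<delta>W[of w] w by auto
    then show ?thesis using \<open>\<psi>1 z = w - pV w\<close> linear_0[OF linpV] by simp
  qed
  define K where "K = {z \<in> int_lattice. \<psi>1 z = 0}"
  have cd: "c * \<delta> > 0" using c \<delta> by simp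
  have G1: "x \<in> span K" if "\<phi> x \<in> V" for x
    unfolding K_def by (rule rational_kernel[OF lin1 cd disc1]) (use that ker1 in auto)
  have K0: "0 \<in> K" unfolding K_def using linear_0[OF lin1] by simp

  obtain BK where BK: "BK \<subseteq> K" "independent BK" "K \<subseteq> span BK" "card BK = dim K"
    by (rule basis_exists[of K])
  have finBK: "finite BK" and cBK: "card BK \<le> card (UNIV::'n set)" using independent_bound[OF BK(2)] by simp_all
  obtain h :: "real^'n \<Rightarrow> 'n" where h: "inj_on h BK"
    using card_le_inj[OF finBK finite_class.finite_UNIV cBK] by blast
  define k where "k i = (if i \<in> h ` BK then inv_into BK h i else 0)" for i
  have kK: "k i \<in> K" for i
  proof (cases "i \<in> h ` BK")
    case True
    then have "inv_into BK h i \<in> BK" by (rule inv_into_into)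
    then show ?thesis using True BK(1) by (simp add: k_def subset_iff)
  next
    case False
    then show ?thesis using K0 by (simp add: k_def)
  qed
  have BKk: "BK \<subseteq> range k"
  proof
    fix b assume "b \<in> BK"
    then have "k (h b) = b" using h by (simp add: k_def)
    then show "b \<in> range k" by (metis rangeI)
  qed
  have spanK: "span K \<subseteq> span (range k)"
  proof -
    have "span K \<subseteq> span BK" using BK(3) by (rule span_minimal) (rule subspace_span)
    also have "\<dots> \<subseteq> span (range k)" using BKk by (rule span_mono)
    finally show ?thesis .
  qed
  define \<psi>2 :: "real^'n \<Rightarrow> real^'n" where "\<psi>2 y = (\<chi> i. y \<bullet> k i)" for y
  have lin2: "linear \<psi>2"
    by (rule linearI) (simp_all add: \<psi>2_def vec_eq_iff inner_add_left)
  have disc2: "\<psi>2 z = 0" if "z \<in> int_lattice" "norm (\<psi>2 z) < 1" for z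
  proof -
    have kZ: "k i \<in> int_lattice" for i using kK[of i] by (simp add: K_def)
    have "\<psi>2 z \<in> int_lattice"
      unfolding int_lattice_iff \<psi>2_def using int_lattice_inner[OF that(1) kZ] by simp
    then show ?thesis using int_lattice_small that(2) by blast
  qed
  have ker2a: "\<psi>2 y = 0" if "y \<in> U0" for y
  proof -
    have "y \<bullet> k i = 0" for i
    proof -
      have yF: "y \<in> F" using that by (simp add: U0_def)
      have "\<phi> (k i) \<in> V" using kK[of i] ker1 by (simp add: K_def)
      then have "y \<bullet> \<phi> (k i) = 0" using that by (simp add: U0_def)
      then show ?thesis using \<phi>Z[OF yF, of "k i"] by simp
    qed
    then show ?thesis by (simp add: \<psi>2_def vec_eq_iff)
  qed
  have ker2b: "y \<in> U0" if "\<psi>2 y = 0" for y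
  proof -
    have yk: "y \<bullet> k i = 0" for i using that by (simp add: \<psi>2_def vec_eq_iff)
    have yperp: "y \<bullet> x = 0" if "\<phi> x \<in> V" for x
    proof -
      have "x \<in> span (range k)" using G1[OF that] spanK by blast
      moreover have "\<And>w. w \<in> range k \<Longrightarrow> orthogonal y w" using yk by (auto simp: orthogonal_def)
      ultimately have "orthogonal y x" by (rule orthogonal_to_span)
      then show ?thesis by (simp add: orthogonal_def)
    qed
    have yV: "\<forall>v\<in>V. y \<bullet> v = 0"
    proof
      fix v assume "v \<in> V"
      then have "\<phi> v \<in> V" using \<phi>F VF by auto
      then show "y \<bullet> v = 0" by (rule yperp)
    qed
    define r where "r = y - \<phi> y"
    have "\<phi> r = 0" unfolding r_def linear_diff[OF lin\<phi>] using \<phi>F[OF \<phi>mem[of y]] by simp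
    then have "\<phi> r \<in> V" using sV by (simp add: subspace_0)
    then have yr: "y \<bullet> r = 0" by (rule yperp)
    have "r \<bullet> \<phi> y = 0" unfolding r_def using proj[of y] by blast
    then have "r \<bullet> r = 0" using yr by (simp add: r_def inner_diff_left inner_diff_right inner_commute)
    then have "y = \<phi> y" by (simp add: r_def)
    then have "y \<in> F" using \<phi>mem[of y] by metis
    then show ?thesis using yV by (simp add: U0_def)
  qed
  have G2: "U0 \<subseteq> span L"
  proof
    fix y assume "y \<in> U0"
    then have "y \<in> span {z \<in> int_lattice. \<psi>2 z = 0}"
      by (intro rational_kernel[OF lin2 zero_less_one disc2] ker2a)
    moreover have "{z \<in> int_lattice. \<psi>2 z = 0} \<subseteq> L"
      using ker2b unfolding L_def U0_def by blast
    ultimately show "y \<in> span L" using span_mono by blast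
  qed
  have spanL: "span L = U0" using G2 spanLU0 by blast

  have dimU0: "dim U0 = dim F - dim V"
  proof -
    have sumF: "{x + y |x y. x \<in> V \<and> y \<in> U0} = F"
    proof
      show "{x + y |x y. x \<in> V \<and> y \<in> U0} \<subseteq> F"
        using VF sF by (auto simp: U0_def intro: subspace_add)
      show "F \<subseteq> {x + y |x y. x \<in> V \<and> y \<in> U0}"
      proof
        fix f assume fF: "f \<in> F"
        have "f - pV f \<in> F" using fF VF pVmem[of f] sF by (auto intro: subspace_diff)
        then have "f - pV f \<in> U0" using pVorth unfolding U0_def by blast
        moreover have "f = pV f + (f - pV f)" by simp
        ultimately show "f \<in> {x + y |x y. x \<in> V \<and> y \<in> U0}" using pVmem by blast
      qed
    qed
    have "V \<inter> U0 \<subseteq> {0}" unfolding U0_def by auto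
    then have d0: "dim (V \<inter> U0) = 0" by simp
    have "dim F + dim (V \<inter> U0) = dim V + dim U0" using dim_sums_Int[OF sV sU0] sumF by simp
    then have "dim F = dim V + dim U0" using d0 by linarith
    then show ?thesis by simp
  qed

  have rank: "group_rank L = dim U0"
    unfolding group_rank_def
  proof (rule Greatest_equality)
    obtain B where B: "B \<subseteq> L" "independent B" "L \<subseteq> span B" "card B = dim L"
      by (rule basis_exists[of L])
    have finB: "finite B" using independent_bound[OF B(2)] by simp
    have "dim L = dim U0" using spanL dim_span[of L] by simp
    moreover have "int_independent B"
      unfolding int_independent_def
    proof (intro allI impI)
      fix T c assume T: "finite T \<and> T \<subseteq> B \<and> (\<forall>v\<in>T. c v \<in> \<int>) \<and> (\<Sum>v\<in>T. c v *\<^sub>R v) = 0"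
      then have "independent T" using B(2) independent_mono by blast
      then show "\<forall>v\<in>T. c v = 0" using T unfolding independent_explicit by blast
    qed
    ultimately show "\<exists>S\<subseteq>L. finite S \<and> card S = dim U0 \<and> int_independent S"
      using B finB by auto
  next
    fix y assume "\<exists>S\<subseteq>L. finite S \<and> card S = y \<and> int_independent S"
    then obtain S where S: "S \<subseteq> L" "finite S" "card S = y" "int_independent S" by blast
    have "independent S"
    proof (rule ccontr)
      assume "\<not> independent S"
      then obtain a where aS: "a \<in> S" and asp: "a \<in> span (S - {a})"
        unfolding dependent_def by blast
      obtain B' where B': "B' \<subseteq> S - {a}" "independent B'" "S - {a} \<subseteq> span B'" "card B' = dim (S - {a})"
        by (rule basis_exists[of "S - {a}"])
      have finB': "finite B'" using independent_bound[OF B'(2)] by simp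
      have "span (S - {a}) \<subseteq> span B'" using B'(3) by (rule span_minimal) (rule subspace_span)
      then have aB': "a \<in> span B'" using asp by blast
      have SZ: "S \<subseteq> int_lattice" using S(1) unfolding L_def by blast
      then have B'Z: "B' \<subseteq> int_lattice" using B'(1) by blast
      obtain d a' where d: "d > (0::int)" and da: "of_int d *\<^sub>R a = (\<Sum>b\<in>B'. of_int (a' b) *\<^sub>R b)"
        using rational_span[OF B'(2) B'Z _ aB'] aS SZ by blast
      define cc :: "real^'n \<Rightarrow> real" where "cc v = (if v = a then - of_int d else of_int (a' v))" for v
      have aB'n: "a \<notin> B'" using B'(1) by blast
      have "(\<Sum>v\<in>insert a B'. cc v *\<^sub>R v) = cc a *\<^sub>R a + (\<Sum>v\<in>B'. cc v *\<^sub>R v)"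
        using finB' aB'n by simp
      also have "(\<Sum>v\<in>B'. cc v *\<^sub>R v) = (\<Sum>b\<in>B'. of_int (a' b) *\<^sub>R b)"
        using aB'n by (intro sum.cong) (auto simp: cc_def)
      finally have "(\<Sum>v\<in>insert a B'. cc v *\<^sub>R v) = 0"
        using da by (simp add: cc_def)
      moreover have "finite (insert a B')" using finB' by simp
      moreover have "insert a B' \<subseteq> S" using aS B'(1) by blast
      moreover have "\<forall>v\<in>insert a B'. cc v \<in> \<int>" by (auto simp: cc_def)
      ultimately have "\<forall>v\<in>insert a B'. cc v = 0"
        using S(4) unfolding int_independent_def by blast
      then have "cc a = 0" by blast
      then show False using d by (simp add: cc_def)
    qed
    then show "y \<le> dim U0"
      using independent_card_le_dim[OF _ \<open>independent S\<close>, of U0] S(1,3) LU0 by auto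
  qed

  have Kadd: "a + b \<in> K" if "a \<in> K" "b \<in> K" for a b
    using that unfolding K_def by (auto intro: int_lattice_add simp: linear_add[OF lin1])
  have Kscale: "of_int m *\<^sub>R a \<in> K" if "a \<in> K" for a m
    using that unfolding K_def by (auto intro: int_lattice_scale simp: linear_scale[OF lin1])
  define M where "M = set_plus_sp K L"
  have M0: "0 \<in> M" unfolding M_def set_plus_sp_def using K0 L0 by force
  have Madd: "a + b \<in> M" if ab: "a \<in> M" "b \<in> M" for a b
  proof -
    obtain k1 l1 k2 l2 where "k1 \<in> K" "l1 \<in> L" "k2 \<in> K" "l2 \<in> L" "a = k1 + l1" "b = k2 + l2"
      using ab unfolding M_def set_plus_sp_def by blast
    moreover have "a + b = (k1 + k2) + (l1 + l2)" using calculation by (simp add: algebra_simps)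
    ultimately show ?thesis unfolding M_def set_plus_sp_def using Kadd Ladd by blast
  qed
  have Mscale: "of_int m *\<^sub>R a \<in> M" if ab: "a \<in> M" for a m
  proof -
    obtain k1 l1 where "k1 \<in> K" "l1 \<in> L" "a = k1 + l1"
      using ab unfolding M_def set_plus_sp_def by blast
    moreover have "of_int m *\<^sub>R a = of_int m *\<^sub>R k1 + of_int m *\<^sub>R l1"
      using calculation by (simp add: scaleR_add_right)
    ultimately show ?thesis unfolding M_def set_plus_sp_def using Kscale Lscale by blast
  qed
  have Msum: "finite A \<Longrightarrow> (\<forall>i\<in>A. g i \<in> M) \<Longrightarrow> sum g A \<in> M" for A and g :: "'x \<Rightarrow> real^'n"
    by (induction A rule: finite_induct) (auto intro: M0 Madd)
  have KM: "a \<in> M" if "a \<in> K" for a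
    unfolding M_def set_plus_sp_def using that L0 by force
  have LM: "a \<in> M" if "a \<in> L" for a
    unfolding M_def set_plus_sp_def using that K0 by force
  have axisM: "\<exists>d. d > (0::int) \<and> of_int d *\<^sub>R axis i 1 \<in> M" for i
  proof -
    define x :: "real^'n" where "x = axis i 1"
    define s where "s = pV (\<phi> x) + (x - \<phi> x)"
    have "\<phi> s = pV (\<phi> x)"
      using \<phi>F[OF subsetD[OF VF pVmem[of "\<phi> x"]]] \<phi>F[OF \<phi>mem[of x]]
      by (simp add: s_def linear_add[OF lin\<phi>] linear_diff[OF lin\<phi>])
    then have "\<phi> s \<in> V" using pVmem by simp
    then have sK: "s \<in> span K" by (rule G1)
    have "x - s = \<phi> x - pV (\<phi> x)" by (simp add: s_def)
    moreover have "\<phi> x - pV (\<phi> x) \<in> F"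
      using \<phi>mem[of x] VF pVmem[of "\<phi> x"] sF by (auto intro: subspace_diff)
    ultimately have "x - s \<in> U0" using pVorth unfolding U0_def by auto
    then have xsL: "x - s \<in> span L" using spanL by simp
    have "x = s + (x - s)" by simp
    moreover have "s \<in> span (K \<union> L)" using sK span_mono[of K "K \<union> L"] by blast
    moreover have "x - s \<in> span (K \<union> L)" using xsL span_mono[of L "K \<union> L"] by blast
    ultimately have xKL: "x \<in> span (K \<union> L)" by (metis span_add)
    obtain B where B: "B \<subseteq> K \<union> L" "independent B" "K \<union> L \<subseteq> span B" "card B = dim (K \<union> L)"
      by (rule basis_exists[of "K \<union> L"])
    have finB: "finite B" using independent_bound[OF B(2)] by simp
    have "span (K \<union> L) \<subseteq> span B" using B(3) by (rule span_minimal) (rule subspace_span)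
    then have xB: "x \<in> span B" using xKL by blast
    have BZ: "B \<subseteq> int_lattice" using B(1) unfolding K_def L_def by blast
    have xZ: "x \<in> int_lattice" unfolding x_def int_lattice_def by (simp add: axis_def)
    obtain d a where d: "d > (0::int)" and da: "of_int d *\<^sub>R x = (\<Sum>b\<in>B. of_int (a b) *\<^sub>R b)"
      using rational_span[OF B(2) BZ xZ xB] by blast
    have SM: "(\<Sum>b\<in>B. of_int (a b) *\<^sub>R b) \<in> M"
    proof (rule Msum[OF finB], rule ballI)
      fix b assume "b \<in> B"
      then have "b \<in> M" using B(1) KM LM by blast
      then show "of_int (a b) *\<^sub>R b \<in> M" by (rule Mscale)
    qed
    have "of_int d *\<^sub>R axis i 1 \<in> M" using SM da unfolding x_def by simp
    then show ?thesis using d by blast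
  qed
  then have "\<forall>i. \<exists>d. d > (0::int) \<and> of_int d *\<^sub>R axis i 1 \<in> M" by blast
  from choice[OF this] obtain dd where dd: "\<And>i. dd i > 0" "\<And>i. of_int (dd i) *\<^sub>R axis i 1 \<in> M"
    by blast
  define D where "D = (\<Prod>i\<in>UNIV. dd i)"
  have D0: "D > 0" unfolding D_def using dd(1) by (simp add: prod_pos)
  have DM: "of_int D *\<^sub>R z \<in> M" if zZ: "z \<in> int_lattice" for z
  proof -
    have zi: "z $ i = of_int \<lfloor>z $ i\<rfloor>" for i
    proof -
      have "z $ i \<in> \<int>" using zZ by (simp add: int_lattice_def)
      then show ?thesis by (auto elim!: Ints_cases)
    qed
    have Ddiv: "D = dd i * (D div dd i)" for i
    proof -
      have "dd i dvd D" unfolding D_def by (rule dvd_prodI) auto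
      then show ?thesis by simp
    qed
    have "of_int D *\<^sub>R z = (\<Sum>i\<in>UNIV. of_int D *\<^sub>R (z $ i *\<^sub>R axis i 1))"
    proof -
      have "z = (\<Sum>i\<in>UNIV. z $ i *\<^sub>R axis i 1)"
        using basis_expansion[of z] by (simp add: scalar_mult_eq_scaleR)
      then show ?thesis by (metis scaleR_sum_right)
    qed
    also have "\<dots> = (\<Sum>i\<in>UNIV. of_int (\<lfloor>z $ i\<rfloor> * (D div dd i)) *\<^sub>R (of_int (dd i) *\<^sub>R axis i 1))"
    proof (rule sum.cong[OF refl])
      fix i
      have "of_int D *\<^sub>R (z $ i *\<^sub>R axis i 1) = (of_int D * z $ i) *\<^sub>R (axis i 1 :: real^'n)"
        by simp
      also have "of_int D * z $ i = of_int (\<lfloor>z $ i\<rfloor> * (D div dd i)) * of_int (dd i)"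
        by (subst zi, subst (1) Ddiv[of i]) (simp only: of_int_mult mult_ac)
      finally show "of_int D *\<^sub>R (z $ i *\<^sub>R axis i 1) =
          of_int (\<lfloor>z $ i\<rfloor> * (D div dd i)) *\<^sub>R (of_int (dd i) *\<^sub>R (axis i 1 :: real^'n))"
        by simp
    qed
    also have "\<dots> \<in> M"
    proof (rule Msum)
      show "finite (UNIV :: 'n set)" by simp
      show "\<forall>i\<in>UNIV. of_int (\<lfloor>z $ i\<rfloor> * (D div dd i)) *\<^sub>R (of_int (dd i) *\<^sub>R (axis i 1 :: real^'n)) \<in> M"
        using Mscale[OF dd(2)] by blast
    qed
    finally show ?thesis .
  qed
  have DH: "of_int D *\<^sub>R \<phi> z \<in> H" if zZ: "z \<in> int_lattice" for z
  proof -
    obtain kk ll where kk: "kk \<in> K" and ll: "ll \<in> L" and e: "of_int D *\<^sub>R z = kk + ll"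
      using DM[OF zZ] unfolding M_def set_plus_sp_def by blast
    have "of_int D *\<^sub>R \<phi> z = \<phi> kk + ll"
      using e linear_scale[OF lin\<phi>, of "of_int D" z] linear_add[OF lin\<phi>, of kk ll] \<phi>F[of ll] ll
      unfolding L_def by simp
    moreover have "\<phi> kk \<in> LV" using kk ker1 unfolding K_def LV_def by blast
    ultimately show ?thesis unfolding H_def set_plus_sp_def using ll by (auto simp: add.commute)
  qed
  define coset where "coset x = (\<lambda>h. x + h) ` H" for x
  have coset_shift: "coset (x + g) = coset x" if "g \<in> H" for x g
  proof -
    have "(\<lambda>h. g + h) ` H = H"
    proof
      show "(\<lambda>h. g + h) ` H \<subseteq> H" using Hadd that by blast
      show "H \<subseteq> (\<lambda>h. g + h) ` H"
      proof
        fix h assume "h \<in> H"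
        then have "h - g \<in> H" using Hadd Hneg that by (metis diff_conv_add_uminus)
        then show "h \<in> (\<lambda>h. g + h) ` H" by (intro image_eqI[of _ _ "h - g"]) auto
      qed
    qed
    then have "coset (x + g) = (\<lambda>h. x + h) ` ((\<lambda>h. g + h) ` H)"
      unfolding coset_def image_image by (simp add: add.assoc)
    then show ?thesis using \<open>(\<lambda>h. g + h) ` H = H\<close> by (simp add: coset_def)
  qed
  define R where "R = {r :: real^'n. \<forall>i. r $ i \<in> of_int ` {0..<D}}"
  have finR: "finite R"
  proof -
    have "R \<subseteq> vec_lambda ` (PiE UNIV (\<lambda>_. of_int ` {0..<D}))"
    proof
      fix r assume "r \<in> R"
      then have "vec_nth r \<in> PiE UNIV (\<lambda>_. of_int ` {0..<D})" by (auto simp: R_def PiE_iff)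
      then show "r \<in> vec_lambda ` (PiE UNIV (\<lambda>_. of_int ` {0..<D}))"
        by (intro image_eqI[of _ _ "vec_nth r"]) (simp_all add: vec_nth_inverse)
    qed
    moreover have "finite (PiE (UNIV::'n set) (\<lambda>_. (of_int ` {0..<D} :: real set)))"
      by (rule finite_PiE) auto
    ultimately show ?thesis by (meson finite_imageI finite_subset)
  qed
  have part2: "finite_index H (\<phi> ` int_lattice)"
  proof -
    have "coset ` (\<phi> ` int_lattice) \<subseteq> (\<lambda>r. coset (\<phi> r)) ` R"
    proof
      fix X assume "X \<in> coset ` (\<phi> ` int_lattice)"
      then obtain z where zZ: "z \<in> int_lattice" and X: "X = coset (\<phi> z)" by blast
      have zi: "z $ i = of_int \<lfloor>z $ i\<rfloor>" for i
      proof -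
        have "z $ i \<in> \<int>" using zZ by (simp add: int_lattice_def)
        then show ?thesis by (auto elim!: Ints_cases)
      qed
      define r :: "real^'n" where "r = (\<chi> i. of_int (\<lfloor>z $ i\<rfloor> mod D))"
      define q :: "real^'n" where "q = (\<chi> i. of_int (\<lfloor>z $ i\<rfloor> div D))"
      have zqr: "z = of_int D *\<^sub>R q + r"
      proof (subst vec_eq_iff, rule allI)
        fix i
        have "\<lfloor>z $ i\<rfloor> = D * (\<lfloor>z $ i\<rfloor> div D) + \<lfloor>z $ i\<rfloor> mod D" by simp
        then have "of_int \<lfloor>z $ i\<rfloor> = (of_int D * of_int (\<lfloor>z $ i\<rfloor> div D) + of_int (\<lfloor>z $ i\<rfloor> mod D) :: real)"
          by (metis of_int_add of_int_mult)
        then show "z $ i = (of_int D *\<^sub>R q + r) $ i" using zi[of i] by (simp add: q_def r_def)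
      qed
      have qZ: "q \<in> int_lattice" by (simp add: q_def int_lattice_def)
      have rR: "r \<in> R" using D0 by (auto simp: r_def R_def intro!: imageI)
      have "\<phi> z = \<phi> r + of_int D *\<^sub>R \<phi> q"
        using zqr linear_add[OF lin\<phi>] linear_scale[OF lin\<phi>] by (metis add.commute)
      then have "X = coset (\<phi> r)" using X coset_shift DH[OF qZ] by simp
      then show "X \<in> (\<lambda>r. coset (\<phi> r)) ` R" using rR by blast
    qed
    then have "finite (coset ` (\<phi> ` int_lattice))"
      using finR by (meson finite_imageI finite_subset)
    then show ?thesis unfolding finite_index_def coset_def .
  qed
  show ?thesis
    using part1 part2 part4 rank dimU0 unfolding H_def L_def LV_def by simp
qed

end
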